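(* For $m \ge 1$, the number $b(m)$ of odd Grassmannian involutions of $[m]$ equals $\left\lfloor \frac{(m+1)^2}{8}\right\rfloor$.
   Context: A permutation is Grassmannian if it has at most one descent; a Grassmannian involution is a Grassmannian permutation $\pi$ with $\pi^{-1}=\pi$. A permutation is odd if it has an odd number of inversions (pairs $i<j$ with $\pi_i>\pi_j$). *)

theory Defs
  imports Complex_Main "HOL-Combinatorics.Permutations"
begin

definition descents :: "nat \<Rightarrow> (nat \<Rightarrow> nat) \<Rightarrow> nat set" where
  "descents m p = {i. 1 \<le> i \<and> i < m \<and> p i > p (Suc i)}"

definition grassmannian :: "nat \<Rightarrow> (nat \<Rightarrow> nat) \<Rightarrow> bool" where
  "grassmannian m p \<longleftrightarrow> card (descents m p) \<le> 1"

definition inversions :: "nat \<Rightarrow> (nat \<Rightarrow> nat) \<Rightarrow> (nat \<times> nat) set" where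
  "inversions m p = {(i, j). 1 \<le> i \<and> i < j \<and> j \<le> m \<and> p i > p j}"

definition odd_perm :: "nat \<Rightarrow> (nat \<Rightarrow> nat) \<Rightarrow> bool" where
  "odd_perm m p \<longleftrightarrow> odd (card (inversions m p))"

definition grassmannian_involution :: "nat \<Rightarrow> (nat \<Rightarrow> nat) \<Rightarrow> bool" where
  "grassmannian_involution m p \<longleftrightarrow>
     p permutes {1..m} \<and> grassmannian m p \<and> inv p = p"

definition b :: "nat \<Rightarrow> nat" where
  "b m = card {p. grassmannian_involution m p \<and> odd_perm m p}"

end

theory Submission
  imports Defs
begin

definition sw :: "nat \<Rightarrow> nat \<Rightarrow> nat \<Rightarrow> nat" where
  "sw a j x = (if a < x \<and> x \<le> a+j then x+j else if a+j < x \<and> x \<le> a+2*j then x-j else x)"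

lemma sw_sw: "sw a j (sw a j x) = x"
  unfolding sw_def by auto

lemma sw_permutes: "a+2*j \<le> m \<Longrightarrow> sw a j permutes {1..m}"
  unfolding permutes_def
proof (intro conjI allI impI)
  fix x assume "a+2*j \<le> m" "x \<notin> {1..m}"
  then show "sw a j x = x" unfolding sw_def by auto
next
  fix y show "\<exists>!x. sw a j x = y"
    by (metis sw_sw)
qed

lemma sw_inv: "inv (sw a j) = sw a j"
  by (rule inv_unique_comp) (auto simp: fun_eq_iff sw_sw)

lemma sw_desc: "descents m (sw a j) \<subseteq> {a+j}"
  unfolding descents_def sw_def by auto

lemma sw_grass: "grassmannian m (sw a j)"
proof -
  have "card (descents m (sw a j)) \<le> card {a+j}"
    by (rule card_mono) (auto simp: sw_desc)
  then show ?thesis unfolding grassmannian_def by simp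
qed

lemma sw_inversions: "a+2*j \<le> m \<Longrightarrow>
  inversions m (sw a j) = {a<..a+j} \<times> {a+j<..a+2*j}"
proof (rule set_eqI, clarify)
  fix i i' assume h: "a+2*j \<le> m"
  show "((i, i') \<in> inversions m (sw a j)) = ((i, i') \<in> {a<..a+j} \<times> {a+j<..a+2*j})"
    unfolding inversions_def sw_def using h
    by (simp split: if_split) linarith
qed

lemma sw_card_inv: "a+2*j \<le> m \<Longrightarrow> card (inversions m (sw a j)) = j*j"
  by (simp add: sw_inversions)


lemma arith8: "(m+2::nat)^2 div 8 = (m+1)^2 div 8 + (m+3) div 4"
proof -
  obtain q r where m: "m = 8*q + r" "r < 8" by (metis div_mod_decomp mod_less_divisor zero_less_numeral mult.commute)
  define B where "B = 8*q*q + 2*q*(r+1)"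
  have e1: "(m+2)^2 = 8*(B + 2*q) + (r+2)^2" unfolding m(1) B_def power2_eq_square by algebra
  have e2: "(m+1)^2 = 8*B + (r+1)^2" unfolding m(1) B_def power2_eq_square by algebra
  have e3: "m+3 = 4*(2*q) + (r+3)" using m by simp
  have "r = 0 \<or> r = 1 \<or> r = 2 \<or> r = 3 \<or> r = 4 \<or> r = 5 \<or> r = 6 \<or> r = 7" using m by arith
  then show ?thesis unfolding e1 e2 e3 by (elim disjE) (simp_all add: power2_eq_square, presburger+)
qed

lemma card_J: "card {j::nat. odd j \<and> 2*j \<le> n} = (n+2) div 4"
proof -
  have "{j::nat. odd j \<and> 2*j \<le> n} = (\<lambda>i. 2*i+1) ` {..<(n+2) div 4}"
  proof (rule set_eqI, rule iffI)
    fix j assume "j \<in> {j::nat. odd j \<and> 2*j \<le> n}"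
    then obtain i where "j = 2*i+1" "4*i+2 \<le> n" by (auto elim!: oddE)
    then show "j \<in> (\<lambda>i. 2*i+1) ` {..<(n+2) div 4}" by (auto intro!: image_eqI[where x=i])
  next
    fix j assume "j \<in> (\<lambda>i. 2*i+1) ` {..<(n+2) div 4}"
    then show "j \<in> {j::nat. odd j \<and> 2*j \<le> n}" by auto
  qed
  moreover have "inj (\<lambda>i::nat. 2*i+1)" by (auto simp: inj_def)
  ultimately show ?thesis by (simp add: card_image inj_on_subset)
qed

definition S :: "nat \<Rightarrow> (nat \<times> nat) set" where
  "S m = {(a,j). odd j \<and> a+2*j \<le> m}"

lemma S_fin: "finite (S m)"
  by (rule finite_subset[of _ "{..m} \<times> {..m}"]) (auto simp: S_def)

lemma card_S: "card (S m) = (m+1)^2 div 8"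
proof (induction m)
  case 0
  have "S 0 = {}" by (auto simp: S_def)
  then show ?case by simp
next
  case (Suc m)
  define T where "T = {(a,j). odd j \<and> a+2*j = Suc m}"
  have split: "S (Suc m) = S m \<union> T" by (auto simp: S_def T_def)
  have disj: "S m \<inter> T = {}" by (auto simp: S_def T_def)
  have Tim: "T = (\<lambda>j. (Suc m - 2*j, j)) ` {j. odd j \<and> 2*j \<le> Suc m}"
    by (auto simp: T_def image_iff)
  have "inj (\<lambda>j::nat. (Suc m - 2*j, j))" by (auto simp: inj_def)
  then have cT: "card T = (Suc m + 2) div 4" unfolding Tim
    by (simp add: card_image inj_on_subset card_J)
  have fT: "finite T" unfolding Tim by (rule finite_imageI, rule finite_subset[of _ "{..Suc m}"]) auto
  have "card (S (Suc m)) = card (S m) + card T"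
    unfolding split by (rule card_Un_disjoint[OF S_fin fT disj])
  also have "\<dots> = (m+1)^2 div 8 + (m+3) div 4" using Suc cT by simp
  also have "\<dots> = (m+2)^2 div 8" by (rule arith8[symmetric])
  finally show ?case by (simp add: add.commute)
qed


lemma step_mono:
  assumes st: "\<forall>i. lo \<le> i \<and> i < hi \<longrightarrow> (f::nat\<Rightarrow>nat) i < f (Suc i)"
    and "lo \<le> i" "i \<le> i'" "i' \<le> hi"
  shows "f i + (i' - i) \<le> f i'"
proof -
  have "i' \<le> hi \<longrightarrow> f i + (i' - i) \<le> f i'"
    using \<open>i \<le> i'\<close>
  proof (induction i' rule: dec_induct)
    case base then show ?case by simp
  next
    case (step n)
    show ?case
    proof
      assume "Suc n \<le> hi"
      then have "f n < f (Suc n)" using st step.hyps \<open>lo \<le> i\<close> by auto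
      moreover have "f i + (n - i) \<le> f n" using step \<open>Suc n \<le> hi\<close> by auto
      ultimately show "f i + (Suc n - i) \<le> f (Suc n)" using step.hyps by linarith
    qed
  qed
  then show ?thesis using assms by blast
qed

lemma char:
  assumes p: "p permutes {1..m}" and iv: "inv p = p" and g: "grassmannian m p"
  shows "\<exists>a j. a+2*j \<le> m \<and> p = sw a j"
proof -
  have pp: "\<And>x. p (p x) = x" using permutes_inverses(1)[OF p] iv by metis
  have out: "\<And>x. x \<notin> {1..m} \<Longrightarrow> p x = x" using permutes_not_in[OF p] by blast
  have rng: "\<And>x. x \<in> {1..m} \<Longrightarrow> p x \<in> {1..m}" using permutes_in_image[OF p] by blast
  have inj: "\<And>x y. p x = p y \<Longrightarrow> x = y" by (metis pp)
  have fd: "finite (descents m p)"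
    by (rule finite_subset[of _ "{1..<m}"]) (auto simp: descents_def)
  have c1: "\<forall>a1\<in>descents m p. \<forall>a2\<in>descents m p. a1 = a2"
    using g card_le_Suc0_iff_eq[OF fd] unfolding grassmannian_def by simp
  have nd: "\<And>i. 1 \<le> i \<Longrightarrow> i < m \<Longrightarrow> i \<notin> descents m p \<Longrightarrow> p i < p (Suc i)"
  proof -
    fix i assume "1 \<le> i" "i < m" "i \<notin> descents m p"
    then have "\<not> p i > p (Suc i)" by (auto simp: descents_def)
    moreover have "p i \<noteq> p (Suc i)" using inj by (metis n_not_Suc_n)
    ultimately show "p i < p (Suc i)" by linarith
  qed
  show ?thesis
  proof (cases "descents m p = {}")
    case True
    then have st: "\<forall>i. 1 \<le> i \<and> i < m \<longrightarrow> p i < p (Suc i)" using nd by auto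
    have fix1: "p x = x" for x
    proof (cases "x \<in> {1..m}")
      case False then show ?thesis using out by blast
    next
      case True
      have "p 1 + (x - 1) \<le> p x" using step_mono[OF st, of 1 x] True by auto
      moreover have "p x + (m - x) \<le> p m" using step_mono[OF st, of x m] True by auto
      moreover have "p 1 \<ge> 1" "p m \<le> m" using rng[of 1] rng[of m] True by auto
      ultimately show ?thesis using True by auto
    qed
    have "p = sw 0 0" by (rule ext) (simp add: fix1 sw_def)
    then show ?thesis by (intro exI[of _ 0]) simp
  next
    case False
    then obtain k where kd: "k \<in> descents m p" by blast
    then have D: "descents m p = {k}" using c1 by blast
    from kd have k1: "1 \<le> k" "k < m" "p (Suc k) < p k" by (auto simp: descents_def)
    have stL: "\<forall>i. 1 \<le> i \<and> i < k \<longrightarrow> p i < p (Suc i)" using nd D k1 by auto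
    have stR: "\<forall>i. Suc k \<le> i \<and> i < m \<longrightarrow> p i < p (Suc i)" using nd D k1 by auto
    have L: "\<And>x. 1 \<le> x \<Longrightarrow> x \<le> k \<Longrightarrow> x \<le> p x"
    proof -
      fix x assume "1 \<le> x" "x \<le> k"
      then have "p 1 + (x - 1) \<le> p x" using step_mono[OF stL, of 1 x] by auto
      moreover have "p 1 \<ge> 1" using rng[of 1] k1 by auto
      ultimately show "x \<le> p x" by linarith
    qed
    have U: "\<And>x. Suc k \<le> x \<Longrightarrow> x \<le> m \<Longrightarrow> p x \<le> x"
    proof -
      fix x assume "Suc k \<le> x" "x \<le> m"
      then have "p x + (m - x) \<le> p m" using step_mono[OF stR, of x m] by auto
      moreover have "p m \<le> m" using rng[of m] k1 by auto
      ultimately show "p x \<le> x" using \<open>x \<le> m\<close> by linarith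
    qed
    have Mk: "\<And>x y. 1 \<le> x \<Longrightarrow> x \<le> y \<Longrightarrow> y \<le> k \<Longrightarrow> p x \<le> p y"
      using step_mono[OF stL] by fastforce
    have Mr: "\<And>x y. Suc k \<le> x \<Longrightarrow> x \<le> y \<Longrightarrow> y \<le> m \<Longrightarrow> p x \<le> p y"
      using step_mono[OF stR] by fastforce
    have C1: "\<And>x. 1 \<le> x \<Longrightarrow> x \<le> k \<Longrightarrow> p x \<le> k \<Longrightarrow> p x = x"
    proof (rule ccontr)
      fix x assume h: "1 \<le> x" "x \<le> k" "p x \<le> k" "p x \<noteq> x"
      then have "x < p x" using L by force
      then have "p x \<le> p (p x)" using L[of "p x"] h by auto
      then show False using pp[of x] \<open>x < p x\<close> by simp
    qed
    have C2: "\<And>x. Suc k \<le> x \<Longrightarrow> x \<le> m \<Longrightarrow> k < p x \<Longrightarrow> p x = x"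
    proof (rule ccontr)
      fix x assume h: "Suc k \<le> x" "x \<le> m" "k < p x" "p x \<noteq> x"
      then have "p x < x" using U by force
      then have "p (p x) \<le> p x" using U[of "p x"] h by auto
      then show False using pp[of x] \<open>p x < x\<close> by simp
    qed
    define P where "P i \<longleftrightarrow> i \<le> k \<and> (\<forall>i'. 1 \<le> i' \<and> i' \<le> i \<longrightarrow> p i' \<le> k)" for i
    define t where "t = (GREATEST i. P i)"
    have P0: "P 0" by (simp add: P_def)
    have Pb: "\<forall>y. P y \<longrightarrow> y \<le> k" by (simp add: P_def)
    have tP: "P t" unfolding t_def by (rule GreatestI_nat[of P 0 k, OF P0]) (use Pb in blast)
    have tR: "\<And>x. t < x \<Longrightarrow> x \<le> k \<Longrightarrow> k < p x"
    proof (rule ccontr)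
      fix x assume h: "t < x" "x \<le> k" "\<not> k < p x"
      have "P x" unfolding P_def using h Mk[of _ x] by fastforce
      then have "x \<le> t" unfolding t_def by (rule Greatest_le_nat[of P x k]) (use Pb in blast)
      then show False using h by simp
    qed
    define Q where "Q i \<longleftrightarrow> k < i \<and> (\<forall>i'. i \<le> i' \<and> i' \<le> m \<longrightarrow> k < p i')" for i
    define s where "s = (LEAST i. Q i)"
    have Qm: "Q (Suc m)" using k1 by (simp add: Q_def)
    have sQ: "Q s" unfolding s_def by (rule LeastI[of Q, OF Qm])
    have sm: "s \<le> Suc m" unfolding s_def by (rule Least_le[of Q "Suc m", OF Qm])
    have sL: "\<And>x. k < x \<Longrightarrow> x < s \<Longrightarrow> p x \<le> k"
    proof (rule ccontr)
      fix x assume h: "k < x" "x < s" "\<not> p x \<le> k"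
      have "Q x" unfolding Q_def using h Mr[of x] by fastforce
      then have "s \<le> x" unfolding s_def by (rule Least_le[of Q x])
      then show False using h by simp
    qed
    have tk: "t \<le> k" using tP by (simp add: P_def)
    have ks: "k < s" using sQ by (simp add: Q_def)
    have AB: "p ` {t<..k} \<subseteq> {k<..<s}"
    proof
      fix y assume "y \<in> p ` {t<..k}"
      then obtain x where x: "x \<in> {t<..k}" "y = p x" by blast
      have "k < p x" using tR x by auto
      moreover have "p x \<le> m" using rng[of x] x k1 by auto
      moreover have "p x < s"
      proof (rule ccontr)
        assume "\<not> p x < s"
        then have "k < p (p x)" using sQ \<open>p x \<le> m\<close> by (auto simp: Q_def)
        then show False using pp[of x] x by simp
      qed
      ultimately show "y \<in> {k<..<s}" using x by simp
    qed
    have BA: "p ` {k<..<s} \<subseteq> {t<..k}"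
    proof
      fix y assume "y \<in> p ` {k<..<s}"
      then obtain x where x: "x \<in> {k<..<s}" "y = p x" by blast
      have "p x \<le> k" using sL x by auto
      moreover have "1 \<le> p x" using rng[of x] x sm k1 by auto
      moreover have "t < p x"
      proof (rule ccontr)
        assume "\<not> t < p x"
        then have "p (p x) \<le> k" using tP \<open>1 \<le> p x\<close> by (auto simp: P_def)
        then show False using pp[of x] x by simp
      qed
      ultimately show "y \<in> {t<..k}" using x by simp
    qed
    have injo: "inj_on p X" for X by (auto intro: inj_onI inj)
    have "card {t<..k} \<le> card {k<..<s}" by (rule card_inj_on_le[OF injo AB]) simp
    moreover have "card {k<..<s} \<le> card {t<..k}" by (rule card_inj_on_le[OF injo BA]) simp
    ultimately have eqc: "k - t = s - Suc k" by simp
    define j where "j = k - t"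
    have sj: "s = k + j + 1" using eqc tk ks unfolding j_def by simp
    have val: "p x = sw t j x" for x
    proof -
      consider "x \<notin> {1..m}" | "1 \<le> x" "x \<le> t" | "t < x" "x \<le> k" | "k < x" "x < s" | "s \<le> x" "x \<le> m"
        by force
      then show ?thesis
      proof cases
        case 1
        then have "p x = x" using out by blast
        moreover have "sw t j x = x" using 1 sj sm tk unfolding sw_def j_def by auto
        ultimately show ?thesis by simp
      next
        case 2
        then have "p x \<le> k" using tP by (auto simp: P_def)
        then have "p x = x" using C1 2 tk by auto
        then show ?thesis using 2 unfolding sw_def by auto
      next
        case 3
        have a: "p (Suc t) + (x - Suc t) \<le> p x" using step_mono[OF stL, of "Suc t" x] 3 by auto
        have b: "p x + (k - x) \<le> p k" using step_mono[OF stL, of x k] 3 by auto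
        have c: "k < p (Suc t)" using tR 3 by auto
        have d: "p k < s" using AB 3 unfolding image_subset_iff by auto
        have "p x = x + j" using a b c d 3 sj unfolding j_def by linarith
        then show ?thesis using 3 unfolding sw_def j_def by auto
      next
        case 4
        have a: "p (Suc k) + (x - Suc k) \<le> p x" using step_mono[OF stR, of "Suc k" x] 4 sm by auto
        have b: "p x + (s - 1 - x) \<le> p (s - 1)" using step_mono[OF stR, of x "s - 1"] 4 sm by auto
        have c: "t < p (Suc k)" using BA 4 unfolding image_subset_iff by auto
        have d: "p (s - 1) \<le> k" using sL 4 by auto
        have "p x = x - j" using a b c d 4 sj unfolding j_def by linarith
        then show ?thesis using 4 sj unfolding sw_def j_def by auto
      next
        case 5
        then have "k < p x" using sQ by (auto simp: Q_def)
        then have "p x = x" using C2 5 ks by auto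
        then show ?thesis using 5 sj tk unfolding sw_def j_def by auto
      qed
    qed
    have "t + 2*j \<le> m" using sj sm tk unfolding j_def by simp
    then show ?thesis using val by blast
  qed
qed

lemma sw_inj: "inj_on (\<lambda>(a,j). sw a j) (S m)"
proof (rule inj_onI, clarify)
  fix a j a' j' assume h: "(a,j) \<in> S m" "(a',j') \<in> S m" "sw a j = sw a' j'"
  have j1: "j \<ge> 1" "j' \<ge> 1" using h by (auto simp: S_def elim!: oddE)
  have e: "sw a j x = sw a' j' x" for x using h(3) by simp
  have "a = a'"
  proof (rule ccontr)
    assume "a \<noteq> a'"
    then consider "a < a'" | "a' < a" by linarith
    then show False
    proof cases
      case 1 then show False using e[of "Suc a"] j1 unfolding sw_def by auto
    next
      case 2 then show False using e[of "Suc a'"] j1 unfolding sw_def by auto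
    qed
  qed
  moreover have "j = j'" using e[of "Suc a"] j1 \<open>a = a'\<close> unfolding sw_def by auto
  ultimately show "a = a' \<and> j = j'" by simp
qed

lemma set_eq: "{p. grassmannian_involution m p \<and> odd_perm m p} = (\<lambda>(a,j). sw a j) ` S m"
proof (rule set_eqI, rule iffI)
  fix p assume "p \<in> {p. grassmannian_involution m p \<and> odd_perm m p}"
  then have h: "p permutes {1..m}" "grassmannian m p" "inv p = p" "odd_perm m p"
    by (auto simp: grassmannian_involution_def)
  obtain a j where aj: "a+2*j \<le> m" "p = sw a j" using char[OF h(1) h(3) h(2)] by blast
  have "odd (j*j)" using h(4) sw_card_inv[OF aj(1)] aj(2) by (simp add: odd_perm_def)
  then have "odd j" by simp
  then have "(a,j) \<in> S m" using aj by (simp add: S_def)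
  then show "p \<in> (\<lambda>(a,j). sw a j) ` S m" using aj by force
next
  fix p assume "p \<in> (\<lambda>(a,j). sw a j) ` S m"
  then obtain a j where aj: "odd j" "a+2*j \<le> m" "p = sw a j" by (auto simp: S_def)
  then show "p \<in> {p. grassmannian_involution m p \<and> odd_perm m p}"
    using sw_permutes[OF aj(2)]
    by (simp add: grassmannian_involution_def odd_perm_def sw_grass sw_inv sw_card_inv)
qed

theorem mainTheorem19:
  fixes m :: nat
  assumes "m \<ge> 1"
  shows "b m = nat \<lfloor>(real (m + 1))^2 / 8\<rfloor>"
proof -
  have "b m = card (S m)" unfolding b_def set_eq by (rule card_image[OF sw_inj])
  also have "\<dots> = (m+1)^2 div 8" by (rule card_S)
  also have "\<dots> = nat \<lfloor>(real (m + 1))^2 / 8\<rfloor>"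
  proof -
    have "(real (m + 1))^2 / 8 = real ((m+1)^2) / real (8::nat)" by simp
    then have "\<lfloor>(real (m + 1))^2 / 8\<rfloor> = int ((m+1)^2 div 8)"
      by (simp only: floor_divide_of_nat_eq)
    then show ?thesis by simp
  qed
  finally show ?thesis .
qed

end
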